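(* Fix any non-negative integer load vector $x^{(t_1)}$ with $\|x^{(t_1)}\|_{1} \leq n \cdot \mathrm{e}^{-(\log n)^{\sigma}}$ for some constant $\sigma \in (0,1)$. Consider a round $t_2 > t_1$ such that (for the given matchings) $[t_1,t_2]$ is $(n,n^{-3})$-smoothing, and let $Z:= \sum_{v \in V} y_v x_v^{(t_2)}$, where $y$ is any non-negative vector with $\|y \|_{1} = 1$. Then for any $\delta > 0$ (and $n$ sufficiently large), \[ \Pr\left[ Z \geq \mathrm{e}^{-\frac{1}{5} (\log n)^{\sigma}} + 8 \| y \|_{\infty} (\log n)^{\delta} \right] \leq \mathrm{e}^{-(\log n)^{\delta+\sigma}/ 6}. \]
   Context: $G=(V,E)$ has $n$ nodes; a matching $\mathbf{M}^{(t)}\subseteq E$ is identified with the symmetric matrix with entries $1/2$ on $(u,u),(v,v),(u,v),(v,u)$ for $\{u,v\}\in\mathbf{M}^{(t)}$, $1$ on the diagonal for unmatched nodes, $0$ elsewhere. Discrete protocol: for each $\{u,v\}\in\mathbf{M}^{(t)}$ both nodes get $\lfloor (x^{(t-1)}_u+x^{(t-1)}_v)/2\rfloor$ tokens and the excess token (if the sum is odd) goes to $u$ or $v$ with probability $1/2$ each, independently; unmatched nodes keep their load. Continuous process: $\xi^{(t)}=\xi^{(t-1)}\mathbf{M}^{(t)}$. $[t_1,t_2]$ is $(K,\epsilon)$-smoothing if every $\xi^{(t_1)}\in\mathbb{R}^n$ with discrepancy $\max_{u,v}|\xi_u-\xi_v|\le K$ yields $\xi^{(t_2)}$ with discrepancy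 at most $\epsilon$. The probability is over the random orientations. The paper assumes $n$ sufficiently large throughout. *)

theory Defs
  imports "HOL-Probability.Probability"
begin

text \<open>Nodes are V = {0..<n}. A matching is a set of ordered pairs (u,v), each
  representing the edge {u,v} exactly once, with pairwise disjoint endpoints.\<close>

definition is_matching :: "nat \<Rightarrow> (nat \<times> nat) set \<Rightarrow> bool" where
  "is_matching n M \<longleftrightarrow> M \<subseteq> {0..<n} \<times> {0..<n} \<and> (\<forall>(u,v)\<in>M. u \<noteq> v) \<and>
     (\<forall>e\<in>M. \<forall>e'\<in>M. e \<noteq> e' \<longrightarrow> {fst e, snd e} \<inter> {fst e', snd e'} = {})"

definition matching_matrix :: "(nat \<times> nat) set \<Rightarrow> nat \<Rightarrow> nat \<Rightarrow> real" where
  "matching_matrix M u v =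
     (if (\<exists>e\<in>M. u \<in> {fst e, snd e} \<and> v \<in> {fst e, snd e}) then 1/2
      else if u = v \<and> (\<forall>e\<in>M. u \<notin> {fst e, snd e}) then 1 else 0)"

definition cont_step :: "nat \<Rightarrow> (nat \<times> nat) set \<Rightarrow> (nat \<Rightarrow> real) \<Rightarrow> (nat \<Rightarrow> real)" where
  "cont_step n M \<xi> = (\<lambda>v. \<Sum>u\<in>{0..<n}. \<xi> u * matching_matrix M u v)"

text \<open>xi^(t1 + k) from xi^(t1), using matchings M (t1+1), ..., M (t1+k).\<close>
fun cont_run :: "nat \<Rightarrow> (nat \<Rightarrow> (nat \<times> nat) set) \<Rightarrow> nat \<Rightarrow> nat \<Rightarrow> (nat \<Rightarrow> real) \<Rightarrow> (nat \<Rightarrow> real)" where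
  "cont_run n M t1 0 \<xi> = \<xi>"
| "cont_run n M t1 (Suc k) \<xi> = cont_step n (M (t1 + Suc k)) (cont_run n M t1 k \<xi>)"

definition discrepancy :: "nat \<Rightarrow> (nat \<Rightarrow> real) \<Rightarrow> real" where
  "discrepancy n \<xi> = Max {\<bar>\<xi> u - \<xi> v\<bar> | u v. u \<in> {0..<n} \<and> v \<in> {0..<n}}"

definition smoothing :: "nat \<Rightarrow> (nat \<Rightarrow> (nat \<times> nat) set) \<Rightarrow> nat \<Rightarrow> nat \<Rightarrow> real \<Rightarrow> real \<Rightarrow> bool" where
  "smoothing n M t1 t2 K \<epsilon> \<longleftrightarrow>
     (\<forall>\<xi>. discrepancy n \<xi> \<le> K \<longrightarrow> discrepancy n (cont_run n M t1 (t2 - t1) \<xi>) \<le> \<epsilon>)"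

text \<open>Discrete protocol, one round. The coin c e = True sends the excess token of
  edge e = (u,v) to u, False sends it to v; coins are independent fair.\<close>
definition disc_update :: "(nat \<times> nat) set \<Rightarrow> (nat \<Rightarrow> nat) \<Rightarrow> ((nat \<times> nat) \<Rightarrow> bool) \<Rightarrow> nat \<Rightarrow> nat" where
  "disc_update M x c w =
     (if \<exists>e\<in>M. w \<in> {fst e, snd e} then
        (let e = (THE e. e \<in> M \<and> w \<in> {fst e, snd e}); s = x (fst e) + x (snd e) in
           s div 2 + (if odd s \<and> ((c e \<and> w = fst e) \<or> (\<not> c e \<and> w = snd e)) then 1 else 0))
      else x w)"

definition disc_step :: "(nat \<times> nat) set \<Rightarrow> (nat \<Rightarrow> nat) \<Rightarrow> (nat \<Rightarrow> nat) pmf" where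
  "disc_step M x = map_pmf (disc_update M x) (Pi_pmf M False (\<lambda>_. bernoulli_pmf (1/2)))"

fun disc_run :: "(nat \<Rightarrow> (nat \<times> nat) set) \<Rightarrow> nat \<Rightarrow> nat \<Rightarrow> (nat \<Rightarrow> nat) \<Rightarrow> (nat \<Rightarrow> nat) pmf" where
  "disc_run M t1 0 x = return_pmf x"
| "disc_run M t1 (Suc k) x = disc_run M t1 k x \<bind> disc_step (M (t1 + Suc k))"

end

theory Submission
  imports Defs
begin


abbreviation matched :: "(nat \<times> nat) set \<Rightarrow> nat \<Rightarrow> bool" where
  "matched M w \<equiv> \<exists>e\<in>M. w \<in> {fst e, snd e}"

lemma edge_unique:
  assumes "is_matching n M" "e \<in> M" "e' \<in> M" "w \<in> {fst e, snd e}" "w \<in> {fst e', snd e'}"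
  shows "e = e'"
  using assms unfolding is_matching_def by blast

lemma edge_ne: assumes "is_matching n M" "e \<in> M" shows "fst e \<noteq> snd e"
  using assms unfolding is_matching_def by auto

lemma edge_lt: assumes "is_matching n M" "e \<in> M" shows "fst e < n" "snd e < n"
  using assms unfolding is_matching_def by auto

lemma the_edge:
  assumes "is_matching n M" "e \<in> M" "w \<in> {fst e, snd e}"
  shows "(THE e'. e' \<in> M \<and> w \<in> {fst e', snd e'}) = e"
  using assms edge_unique[OF assms(1)] by (intro the_equality) blast+

lemma mm_matched:
  assumes "is_matching n M" "e \<in> M" "w \<in> {fst e, snd e}"
  shows "matching_matrix M w v = (if v \<in> {fst e, snd e} then 1/2 else 0)"
proof -
  have "(\<exists>e'\<in>M. w \<in> {fst e', snd e'} \<and> v \<in> {fst e', snd e'}) = (v \<in> {fst e, snd e})"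
    using assms edge_unique[OF assms(1)] by blast
  then show ?thesis using assms unfolding matching_matrix_def by auto
qed

lemma mm_unmatched:
  assumes "\<not> matched M w"
  shows "matching_matrix M w v = (if v = w then 1 else 0)"
  using assms unfolding matching_matrix_def by auto

definition Aop :: "nat \<Rightarrow> (nat \<times> nat) set \<Rightarrow> (nat \<Rightarrow> real) \<Rightarrow> nat \<Rightarrow> real" where
  "Aop n M f u = (\<Sum>v\<in>{0..<n}. matching_matrix M u v * f v)"



lemma Aop_matched:
  assumes "is_matching n M" "e \<in> M" "w \<in> {fst e, snd e}"
  shows "Aop n M f w = (f (fst e) + f (snd e)) / 2"
proof -
  have "Aop n M f w = (\<Sum>v\<in>{0..<n}. if v \<in> {fst e, snd e} then f v / 2 else 0)"
    unfolding Aop_def by (intro sum.cong refl) (simp add: mm_matched[OF assms])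
  also have "\<dots> = (\<Sum>v\<in>{0..<n} \<inter> {fst e, snd e}. f v / 2)"
    by (rule sum.inter_restrict[symmetric]) simp
  also have "\<dots> = (\<Sum>v\<in>{fst e, snd e}. f v / 2)"
    using edge_lt[OF assms(1,2)] by (intro sum.cong) auto
  also have "\<dots> = (f (fst e) + f (snd e)) / 2" using edge_ne[OF assms(1,2)] by simp
  finally show ?thesis .
qed

lemma Aop_unmatched:
  assumes "\<not> matched M w" "w < n"
  shows "Aop n M f w = f w"
proof -
  have "Aop n M f w = (\<Sum>v\<in>{0..<n}. if v = w then f v else 0)"
    unfolding Aop_def by (intro sum.cong) (auto simp: mm_unmatched[OF assms(1)])
  then show ?thesis using assms by simp
qed

lemma decomp:
  assumes "is_matching n M"
  shows "(\<Prod>v\<in>{0..<n}. \<phi> v) = (\<Prod>v\<in>{v\<in>{0..<n}. \<not> matched M v}. \<phi> v) * (\<Prod>e\<in>M. \<phi> (fst e) * \<phi> (snd e))"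
proof -
  have fin: "finite M" using assms unfolding is_matching_def
    by (meson finite_SigmaI finite_atLeastLessThan finite_subset)
  have split: "{0..<n} = {v\<in>{0..<n}. \<not> matched M v} \<union> (\<Union>e\<in>M. {fst e, snd e})"
    using edge_lt[OF assms] by auto
  have "(\<Prod>v\<in>{0..<n}. \<phi> v) = (\<Prod>v\<in>{v\<in>{0..<n}. \<not> matched M v}. \<phi> v) * (\<Prod>v\<in>(\<Union>e\<in>M. {fst e, snd e}). \<phi> v)"
    by (subst split, rule prod.union_disjoint) (use fin in auto)
  also have "(\<Prod>v\<in>(\<Union>e\<in>M. {fst e, snd e}). \<phi> v) = (\<Prod>e\<in>M. \<Prod>v\<in>{fst e, snd e}. \<phi> v)"
    by (rule prod.UNION_disjoint) (use fin assms in \<open>auto simp: is_matching_def\<close>)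
  also have "\<dots> = (\<Prod>e\<in>M. \<phi> (fst e) * \<phi> (snd e))"
    by (intro prod.cong) (auto simp: edge_ne[OF assms])
  finally show ?thesis .
qed



lemma upd_unmatched: "\<not> matched M w \<Longrightarrow> disc_update M x c w = x w"
  unfolding disc_update_def by simp


lemma upd_fst:
  assumes "is_matching n M" "e \<in> M"
  shows "disc_update M x c (fst e) = (x (fst e) + x (snd e)) div 2 +
     (if odd (x (fst e) + x (snd e)) \<and> c e then 1 else 0)"
proof -
  have "matched M (fst e)" using assms by auto
  then show ?thesis unfolding disc_update_def using the_edge[OF assms, of "fst e"] edge_ne[OF assms]
    by (simp add: Let_def)
qed


lemma upd_snd:
  assumes "is_matching n M" "e \<in> M"
  shows "disc_update M x c (snd e) = (x (fst e) + x (snd e)) div 2 +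
     (if odd (x (fst e) + x (snd e)) \<and> \<not> c e then 1 else 0)"
proof -
  have "matched M (snd e)" using assms by auto
  then show ?thesis unfolding disc_update_def using the_edge[OF assms, of "snd e"] edge_ne[OF assms]
    by (simp add: Let_def)
qed


lemma edge_ineq:
  fixes p q :: real assumes "0 < p" "0 < q"
  shows "(p ^ (s div 2 + (if odd s \<and> True then 1 else 0)) * q ^ (s div 2 + (if odd s \<and> \<not> True then 1 else 0))
        + p ^ (s div 2 + (if odd s \<and> False then 1 else 0)) * q ^ (s div 2 + (if odd s \<and> \<not> False then 1 else 0))) / 2
        \<le> ((p + q) / 2) ^ s"
proof -
  obtain k where k: "k = s div 2" by blast
  have sq: "((p+q)/2)^2 - p*q = ((p-q)/2)^2" by (simp add: power2_eq_square field_simps)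
  have "p * q \<le> ((p + q) / 2)^2" using sq zero_le_power2[of "(p-q)/2"] by linarith
  hence "(p * q) ^ k \<le> (((p + q) / 2)^2) ^ k" using assms by (intro power_mono) auto
  hence pq: "(p * q) ^ k \<le> ((p + q) / 2) ^ (2 * k)" by (simp add: power_mult)
  show ?thesis
  proof (cases "odd s")
    case True
    hence s: "s = 2 * k + 1" unfolding k by presburger
    have lhs: "(p ^ (s div 2 + (if odd s \<and> True then 1 else 0)) * q ^ (s div 2 + (if odd s \<and> \<not> True then 1 else 0))
        + p ^ (s div 2 + (if odd s \<and> False then 1 else 0)) * q ^ (s div 2 + (if odd s \<and> \<not> False then 1 else 0))) / 2
        = (p ^ (k + 1) * q ^ k + p ^ k * q ^ (k + 1)) / 2" using True by (simp only: k[symmetric]) simp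
    have "(p ^ (k + 1) * q ^ k + p ^ k * q ^ (k + 1)) / 2 = (p * q) ^ k * ((p + q) / 2)"
      by (simp add: power_mult_distrib field_simps)
    also have "\<dots> \<le> ((p + q) / 2) ^ (2 * k) * ((p + q) / 2)"
      using pq assms by (intro mult_right_mono) auto
    also have "\<dots> = ((p + q) / 2) ^ s" using s by simp
    finally show ?thesis using lhs by simp
  next
    case False
    hence s: "s = 2 * k" unfolding k by presburger
    have lhs: "(p ^ (s div 2 + (if odd s \<and> True then 1 else 0)) * q ^ (s div 2 + (if odd s \<and> \<not> True then 1 else 0))
        + p ^ (s div 2 + (if odd s \<and> False then 1 else 0)) * q ^ (s div 2 + (if odd s \<and> \<not> False then 1 else 0))) / 2
        = (p * q) ^ k" using False by (simp only: k[symmetric]) (simp add: power_mult_distrib)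
    show ?thesis using lhs pq s by simp
  qed
qed


definition Phi :: "nat \<Rightarrow> (nat \<Rightarrow> real) \<Rightarrow> (nat \<Rightarrow> nat) \<Rightarrow> real" where
  "Phi n f x = (\<Prod>v\<in>{0..<n}. f v ^ x v)"

lemma matching_finite: "is_matching n M \<Longrightarrow> finite M"
  unfolding is_matching_def by (meson finite_SigmaI finite_atLeastLessThan finite_subset)

lemma step_bound:
  assumes M: "is_matching n M" and f: "\<forall>v<n. 0 < f v"
  shows "(\<integral>\<^sup>+c. ennreal (Phi n f (disc_update M x c)) \<partial>Pi_pmf M False (\<lambda>_. bernoulli_pmf (1/2)))
          \<le> ennreal (Phi n (Aop n M f) x)"
proof -
  define U where "U = {v\<in>{0..<n}. \<not> matched M v}"
  define C where "C = (\<Prod>v\<in>U. f v ^ x v)"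
  define S where "S e = x (fst e) + x (snd e)" for e
  define h where "h e b = f (fst e) ^ (S e div 2 + (if odd (S e) \<and> b then 1 else 0)) *
      f (snd e) ^ (S e div 2 + (if odd (S e) \<and> \<not> b then 1 else 0))" for e b
  have fin: "finite M" using matching_finite[OF M] .
  have fpos: "0 < f (fst e)" "0 < f (snd e)" if "e \<in> M" for e
    using f edge_lt[OF M that] by auto
  have C0: "0 \<le> C" unfolding C_def U_def using f by (intro prod_nonneg) auto
  have h0: "0 \<le> h e b" if "e \<in> M" for e b unfolding h_def using fpos[OF that] by simp
  have eq: "Phi n f (disc_update M x c) = C * (\<Prod>e\<in>M. h e (c e))" for c
  proof -
    have 1: "(\<Prod>v\<in>U. f v ^ disc_update M x c v) = C"
      unfolding C_def by (intro prod.cong refl) (auto simp: U_def upd_unmatched)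
    have 2: "(\<Prod>e\<in>M. f (fst e) ^ disc_update M x c (fst e) * f (snd e) ^ disc_update M x c (snd e))
         = (\<Prod>e\<in>M. h e (c e))"
      by (intro prod.cong refl) (simp add: h_def S_def upd_fst[OF M] upd_snd[OF M])
    show ?thesis unfolding Phi_def by (subst decomp[OF M]) (simp only: U_def[symmetric] 1 2)
  qed
  have eqA: "Phi n (Aop n M f) x = C * (\<Prod>e\<in>M. ((f (fst e) + f (snd e)) / 2) ^ S e)"
  proof -
    have 1: "(\<Prod>v\<in>U. Aop n M f v ^ x v) = C"
      unfolding C_def by (intro prod.cong refl) (auto simp: U_def Aop_unmatched)
    have 2: "(\<Prod>e\<in>M. Aop n M f (fst e) ^ x (fst e) * Aop n M f (snd e) ^ x (snd e))
         = (\<Prod>e\<in>M. ((f (fst e) + f (snd e)) / 2) ^ S e)"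
      by (intro prod.cong refl) (simp add: S_def Aop_matched[OF M] power_add)
    show ?thesis unfolding Phi_def by (subst decomp[OF M]) (simp only: U_def[symmetric] 1 2)
  qed
  have "(\<integral>\<^sup>+c. ennreal (Phi n f (disc_update M x c)) \<partial>Pi_pmf M False (\<lambda>_. bernoulli_pmf (1/2)))
      = (\<integral>\<^sup>+c. ennreal C * (\<Prod>e\<in>M. ennreal (h e (c e))) \<partial>Pi_pmf M False (\<lambda>_. bernoulli_pmf (1/2)))"
    proof (intro nn_integral_cong)
    fix c
    have p0: "0 \<le> (\<Prod>e\<in>M. h e (c e))" using h0 by (intro prod_nonneg) auto
    have "ennreal (Phi n f (disc_update M x c)) = ennreal C * ennreal (\<Prod>e\<in>M. h e (c e))"
      unfolding eq by (rule ennreal_mult[OF C0 p0])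
    also have "ennreal (\<Prod>e\<in>M. h e (c e)) = (\<Prod>e\<in>M. ennreal (h e (c e)))"
      using h0 by (intro prod_ennreal[symmetric]) auto
    finally show "ennreal (Phi n f (disc_update M x c)) = ennreal C * (\<Prod>e\<in>M. ennreal (h e (c e)))" .
  qed
  also have "\<dots> = ennreal C * (\<integral>\<^sup>+c. (\<Prod>e\<in>M. ennreal (h e (c e))) \<partial>Pi_pmf M False (\<lambda>_. bernoulli_pmf (1/2)))"
    by (rule nn_integral_cmult) simp
  also have "(\<integral>\<^sup>+c. (\<Prod>e\<in>M. ennreal (h e (c e))) \<partial>Pi_pmf M False (\<lambda>_. bernoulli_pmf (1/2)))
      = (\<Prod>e\<in>M. \<integral>\<^sup>+b. ennreal (h e b) \<partial>bernoulli_pmf (1/2))"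
    by (rule nn_integral_prod_Pi_pmf[OF fin])
  also have "\<dots> = (\<Prod>e\<in>M. ennreal ((h e True + h e False) / 2))"
  proof (intro prod.cong refl)
    fix e assume e: "e \<in> M"
    show "(\<integral>\<^sup>+b. ennreal (h e b) \<partial>bernoulli_pmf (1/2)) = ennreal ((h e True + h e False) / 2)"
      proof -
      have a: "0 \<le> h e True" "0 \<le> h e False" using h0[OF e] by auto
      have "(\<integral>\<^sup>+b. ennreal (h e b) \<partial>bernoulli_pmf (1/2)) = ennreal (h e True) * ennreal (1/2) + ennreal (h e False) * ennreal (1/2)"
        using h0[OF e] by simp
      also have "\<dots> = ennreal (h e True * (1/2) + h e False * (1/2))"
        using a by (simp only: ennreal_mult[symmetric] ennreal_plus[symmetric])
      finally show ?thesis by (simp add: field_simps)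
    qed
  qed
  also have "ennreal C * \<dots> = ennreal (C * (\<Prod>e\<in>M. (h e True + h e False) / 2))"
  proof -
    have "(\<Prod>e\<in>M. ennreal ((h e True + h e False) / 2)) = ennreal (\<Prod>e\<in>M. (h e True + h e False) / 2)"
      using h0 by (intro prod_ennreal) auto
    moreover have "0 \<le> (\<Prod>e\<in>M. (h e True + h e False) / 2)" using h0 by (intro prod_nonneg) auto
    ultimately show ?thesis using C0 by (simp add: ennreal_mult)
  qed
  also have "\<dots> \<le> ennreal (C * (\<Prod>e\<in>M. ((f (fst e) + f (snd e)) / 2) ^ S e))"
  proof (intro ennreal_leI mult_left_mono C0 prod_mono conjI)
    fix e assume e: "e \<in> M"
    show "0 \<le> (h e True + h e False) / 2" using h0[OF e] by simp
    show "(h e True + h e False) / 2 \<le> ((f (fst e) + f (snd e)) / 2) ^ S e"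
      unfolding h_def using edge_ineq[OF fpos[OF e], of "S e"] by simp
  qed
  finally show ?thesis using eqA by simp
qed



fun Bop :: "nat \<Rightarrow> (nat \<Rightarrow> (nat \<times> nat) set) \<Rightarrow> nat \<Rightarrow> nat \<Rightarrow> (nat \<Rightarrow> real) \<Rightarrow> nat \<Rightarrow> real" where
  "Bop n M t1 0 f = f"
| "Bop n M t1 (Suc k) f = Bop n M t1 k (Aop n (M (t1 + Suc k)) f)"

lemma Aop_pos:
  assumes M: "is_matching n M" and f: "\<forall>v<n. 0 < f v"
  shows "\<forall>v<n. 0 < Aop n M f v"
proof (intro allI impI)
  fix v assume v: "v < n"
  show "0 < Aop n M f v"
  proof (cases "matched M v")
    case True
    then obtain e where e: "e \<in> M" "v \<in> {fst e, snd e}" by blast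
    have "0 < f (fst e)" "0 < f (snd e)" using f edge_lt[OF M e(1)] by auto
    then show ?thesis unfolding Aop_matched[OF M e, of f] by simp
  next
    case False
    show ?thesis using Aop_unmatched[OF False v, of f] f v by simp
  qed
qed

lemma Bop_pos:
  assumes "\<forall>t. is_matching n (M t)" "\<forall>v<n. 0 < f v"
  shows "\<forall>v<n. 0 < Bop n M t1 k f v"
  using assms(2)
proof (induction k arbitrary: f)
  case 0 then show ?case by simp
next
  case (Suc k) then show ?case using Aop_pos assms(1) by simp
qed

lemma run_bound:
  assumes M: "\<forall>t. is_matching n (M t)" and f: "\<forall>v<n. 0 < f v"
  shows "(\<integral>\<^sup>+x'. ennreal (Phi n f x') \<partial>disc_run M t1 k x) \<le> ennreal (Phi n (Bop n M t1 k f) x)"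
  using f
proof (induction k arbitrary: f)
  case 0
  have "0 \<le> Phi n f x" unfolding Phi_def using 0 by (intro prod_nonneg) auto
  then show ?case by simp
next
  case (Suc k)
  let ?M = "M (t1 + Suc k)"
  have "(\<integral>\<^sup>+x'. ennreal (Phi n f x') \<partial>disc_run M t1 (Suc k) x)
      = (\<integral>\<^sup>+x''. (\<integral>\<^sup>+x'. ennreal (Phi n f x') \<partial>disc_step ?M x'') \<partial>disc_run M t1 k x)"
    by simp
  also have "\<dots> \<le> (\<integral>\<^sup>+x''. ennreal (Phi n (Aop n ?M f) x'') \<partial>disc_run M t1 k x)"
  proof (intro nn_integral_mono)
    fix x''
    show "(\<integral>\<^sup>+x'. ennreal (Phi n f x') \<partial>disc_step ?M x'') \<le> ennreal (Phi n (Aop n ?M f) x'')"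
      unfolding disc_step_def using step_bound[OF M[rule_format] Suc.prems] by simp
  qed
  also have "\<dots> \<le> ennreal (Phi n (Bop n M t1 k (Aop n ?M f)) x)"
    by (rule Suc.IH) (rule Aop_pos[OF M[rule_format] Suc.prems])
  finally show ?case by simp
qed

lemma duality:
  "(\<Sum>v\<in>{0..<n}. \<xi> v * Bop n M t1 k f v) = (\<Sum>u\<in>{0..<n}. cont_run n M t1 k \<xi> u * f u)"
proof (induction k arbitrary: f)
  case 0 then show ?case by simp
next
  case (Suc k)
  have "(\<Sum>v\<in>{0..<n}. \<xi> v * Bop n M t1 (Suc k) f v)
     = (\<Sum>u\<in>{0..<n}. cont_run n M t1 k \<xi> u * Aop n (M (t1 + Suc k)) f u)"
    using Suc by simp
  also have "\<dots> = (\<Sum>u\<in>{0..<n}. \<Sum>v\<in>{0..<n}. cont_run n M t1 k \<xi> u * (matching_matrix (M (t1 + Suc k)) u v * f v))"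
    unfolding Aop_def by (simp only: sum_distrib_left)
  also have "\<dots> = (\<Sum>v\<in>{0..<n}. \<Sum>u\<in>{0..<n}. cont_run n M t1 k \<xi> u * (matching_matrix (M (t1 + Suc k)) u v * f v))"
    by (rule sum.swap)
  also have "\<dots> = (\<Sum>v\<in>{0..<n}. cont_run n M t1 (Suc k) \<xi> v * f v)"
    by (simp only: cont_run.simps cont_step_def sum_distrib_right mult.assoc)
  finally show ?case .
qed

lemma Aop_one: "is_matching n M \<Longrightarrow> u < n \<Longrightarrow> Aop n M (\<lambda>_. 1) u = 1"
  by (cases "matched M u") (auto simp: Aop_matched Aop_unmatched)

lemma cont_step_sum:
  assumes M: "is_matching n M"
  shows "(\<Sum>v\<in>{0..<n}. cont_step n M \<xi> v) = (\<Sum>u\<in>{0..<n}. \<xi> u)"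
proof -
  have "(\<Sum>v\<in>{0..<n}. cont_step n M \<xi> v) = (\<Sum>v\<in>{0..<n}. \<Sum>u\<in>{0..<n}. \<xi> u * matching_matrix M u v)"
    unfolding cont_step_def ..
  also have "\<dots> = (\<Sum>u\<in>{0..<n}. \<Sum>v\<in>{0..<n}. \<xi> u * matching_matrix M u v)"
    by (rule sum.swap)
  also have "\<dots> = (\<Sum>u\<in>{0..<n}. \<xi> u * Aop n M (\<lambda>_. 1) u)"
    unfolding Aop_def by (simp only: sum_distrib_left mult_1_right)
  also have "\<dots> = (\<Sum>u\<in>{0..<n}. \<xi> u)" using Aop_one[OF M] by (intro sum.cong) auto
  finally show ?thesis .
qed

lemma cont_run_sum:
  assumes "\<forall>t. is_matching n (M t)"
  shows "(\<Sum>v\<in>{0..<n}. cont_run n M t1 k \<xi> v) = (\<Sum>u\<in>{0..<n}. \<xi> u)"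
  by (induction k) (simp_all add: cont_step_sum assms)

lemma mm_nonneg: "0 \<le> matching_matrix M u v"
  unfolding matching_matrix_def by auto

lemma cont_run_nonneg:
  assumes "\<forall>v<n. 0 \<le> \<xi> v"
  shows "\<forall>v<n. 0 \<le> cont_run n M t1 k \<xi> v"
proof (induction k)
  case 0 then show ?case using assms by simp
next
  case (Suc k) then show ?case
    by (auto simp: cont_step_def intro!: sum_nonneg mult_nonneg_nonneg mm_nonneg)
qed

lemma Phi_exp:
  assumes "\<forall>v<n. 0 < g v"
  shows "Phi n g x \<le> exp (\<Sum>v\<in>{0..<n}. real (x v) * (g v - 1))"
proof -
  have "Phi n g x \<le> (\<Prod>v\<in>{0..<n}. exp (g v - 1) ^ x v)"
    unfolding Phi_def
  proof (intro prod_mono ballI conjI)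
    fix v assume v: "v \<in> {0..<n}"
    have g: "0 < g v" using assms v by auto
    have "g v \<le> exp (g v - 1)" using exp_ge_add_one_self[of "g v - 1"] by simp
    thus "g v ^ x v \<le> exp (g v - 1) ^ x v" using g by (intro power_mono) auto
    show "0 \<le> g v ^ x v" using g by simp
  qed
  also have "\<dots> = exp (\<Sum>v\<in>{0..<n}. real (x v) * (g v - 1))"
    by (simp add: exp_sum exp_of_nat_mult)
  finally show ?thesis .
qed



lemma exp_convex_bound:
  fixes t c :: real assumes "0 \<le> t" "t \<le> 1"
  shows "exp (t * c) \<le> 1 + t * (exp c - 1)"
  using convex_onD[OF exp_convex, of t 0 c] assms by (simp add: algebra_simps)

lemma numeric:
  fixes s L \<mu> :: real
  assumes "48 \<le> s" "s \<le> L" "0 \<le> \<mu>" "\<mu> \<le> exp (- s) + exp (- 3 * L)"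
  shows "\<mu> * (exp (s/48) - 1) \<le> s * exp (- (1/5) * s) / 48"
proof -
  have e1: "exp (- 3 * L) \<le> exp (- 3 * s)" using assms by simp
  have "\<mu> * (exp (s/48) - 1) \<le> \<mu> * exp (s/48)" using assms by (simp add: mult_left_mono)
  also have "\<dots> \<le> (exp (- s) + exp (- 3 * s)) * exp (s/48)"
    using assms e1 by (intro mult_right_mono) (linarith, simp)
  also have "\<dots> = exp (- s + s / 48) + exp (- 3 * s + s / 48)" by (simp only: distrib_right exp_add)
  also have "\<dots> \<le> 2 * exp (- 47 * s / 48)" using assms by simp
  also have "\<dots> \<le> exp (s * (47/48 - 1/5)) * exp (- 47 * s / 48)"
  proof (intro mult_right_mono)
    have "1 \<le> s * (47/48 - 1/5)" using assms by simp
    thus "2 \<le> exp (s * (47/48 - 1/5))" using exp_ge_add_one_self[of "s * (47/48 - 1/5)"] by linarith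
  qed simp
  also have "\<dots> = exp (- (1/5) * s)" by (simp add: exp_add[symmetric] algebra_simps)
  also have "\<dots> \<le> s * exp (- (1/5) * s) / 48" using assms by simp
  finally show ?thesis .
qed



theorem lemma3p5:
  fixes \<sigma> \<delta> :: real
  assumes "0 < \<sigma>" "\<sigma> < 1" "0 < \<delta>"
  shows "\<exists>N. \<forall>n \<ge> N. \<forall>(M :: nat \<Rightarrow> (nat \<times> nat) set) (x :: nat \<Rightarrow> nat) (t1 :: nat) (t2 :: nat) (y :: nat \<Rightarrow> real).
    (\<forall>t. is_matching n (M t)) \<longrightarrow>
    real (\<Sum>v\<in>{0..<n}. x v) \<le> real n * exp (- (ln (real n) powr \<sigma>)) \<longrightarrow>
    t1 < t2 \<longrightarrow>
    smoothing n M t1 t2 (real n) (real n powr (-3)) \<longrightarrow>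
    (\<forall>v\<in>{0..<n}. 0 \<le> y v) \<longrightarrow> (\<Sum>v\<in>{0..<n}. y v) = 1 \<longrightarrow>
    measure_pmf.prob (disc_run M t1 (t2 - t1) x)
      {x'. (\<Sum>v\<in>{0..<n}. y v * real (x' v)) \<ge>
             exp (- (1/5) * ln (real n) powr \<sigma>) + 8 * Max (y ` {0..<n}) * ln (real n) powr \<delta>}
    \<le> exp (- (ln (real n) powr (\<delta> + \<sigma>)) / 6)"
proof (intro exI allI impI)
  define N :: nat where "N = nat \<lceil>exp (48 powr (1/\<sigma>))\<rceil> + 1"
  fix n :: nat and M :: "nat \<Rightarrow> (nat \<times> nat) set" and x :: "nat \<Rightarrow> nat" and t1 t2 :: nat and y :: "nat \<Rightarrow> real"
  assume nN: "N \<le> n" and Mm: "\<forall>t. is_matching n (M t)"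
    and load: "real (\<Sum>v\<in>{0..<n}. x v) \<le> real n * exp (- (ln (real n) powr \<sigma>))"
    and t12: "t1 < t2" and sm: "smoothing n M t1 t2 (real n) (real n powr (-3))"
    and y0: "\<forall>v\<in>{0..<n}. 0 \<le> y v" and y1: "(\<Sum>v\<in>{0..<n}. y v) = 1"
  define L where "L = ln (real n)"
  define s where "s = L powr \<sigma>"
  define m where "m = real (\<Sum>v\<in>{0..<n}. x v)"
  have n_gt: "exp (48 powr (1/\<sigma>)) < real n"
  proof -
    have "exp (48 powr (1/\<sigma>)) \<le> real (nat \<lceil>exp (48 powr (1/\<sigma>))\<rceil>)" by linarith
    thus ?thesis using nN unfolding N_def by linarith
  qed
  have npos: "0 < real n" using n_gt by (meson exp_gt_zero less_trans)
  hence n1: "1 \<le> n" by simp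
  have L48: "48 powr (1/\<sigma>) < L" unfolding L_def using n_gt npos
    by (metis exp_less_cancel_iff exp_ln)
  have p1: "48 \<le> 48 powr (1/\<sigma>)"
  proof -
    have "48 powr 1 \<le> 48 powr (1/\<sigma>)" using assms by (intro powr_mono) auto
    thus ?thesis by simp
  qed
  have L1: "1 \<le> L" using L48 p1 by linarith
  have s48: "48 \<le> s"
  proof -
    have "(48 powr (1/\<sigma>)) powr \<sigma> \<le> L powr \<sigma>" using L48 assms by (intro powr_mono2) auto
    thus ?thesis unfolding s_def using assms by (simp add: powr_powr)
  qed
  have sL: "s \<le> L"
  proof -
    have "L powr \<sigma> \<le> L powr 1" using L1 assms by (intro powr_mono) auto
    thus ?thesis unfolding s_def using L1 by simp
  qed
  define Y where "Y = Max (y ` {0..<n})"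
  have yY: "y v \<le> Y" if "v < n" for v unfolding Y_def using that by (intro Max_ge) auto
  have Ypos: "0 < Y"
  proof (rule ccontr)
    assume "\<not> 0 < Y"
    hence "\<forall>v\<in>{0..<n}. y v \<le> 0" using yY by force
    hence "(\<Sum>v\<in>{0..<n}. y v) \<le> 0" by (intro sum_nonpos) auto
    thus False using y1 by simp
  qed
  define lam where "lam = s / (48 * Y)"
  have lam0: "0 < lam" unfolding lam_def using Ypos s48 by simp
  define f where "f v = exp (lam * y v)" for v
  have fpos: "\<forall>v<n. 0 < f v" unfolding f_def by simp
  define T where "T = exp (- (1/5) * L powr \<sigma>) + 8 * Y * L powr \<delta>"
  define Z where "Z x' = (\<Sum>v\<in>{0..<n}. y v * real (x' v))" for x' :: "nat \<Rightarrow> nat"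
  define p where "p = disc_run M t1 (t2 - t1) x"
  define B where "B = Bop n M t1 (t2 - t1) f"
  have Bpos: "\<forall>v<n. 0 < B v" unfolding B_def using Bop_pos[OF Mm fpos] .
  have PhiZ: "Phi n f x' = exp (lam * Z x')" for x'
    unfolding Phi_def f_def Z_def
    by (simp add: exp_sum sum_distrib_left exp_of_nat_mult[symmetric] algebra_simps)
  have "ennreal (measure_pmf.prob p {x'. Z x' \<ge> T}) = emeasure (measure_pmf p) {x'. Z x' \<ge> T}"
    by (simp add: measure_pmf.emeasure_eq_measure)
  also have "\<dots> = (\<integral>\<^sup>+x'. indicator {x'. Z x' \<ge> T} x' \<partial>p)" by simp
  also have "\<dots> \<le> (\<integral>\<^sup>+x'. ennreal (exp (- lam * T)) * ennreal (Phi n f x') \<partial>p)"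
  proof (intro nn_integral_mono)
    fix x'
    have "indicator {x'. Z x' \<ge> T} x' \<le> ennreal (exp (- lam * T) * Phi n f x')"
    proof (cases "Z x' \<ge> T")
      case True
      have "1 \<le> exp (- lam * T) * Phi n f x'"
        unfolding PhiZ exp_add[symmetric] using True lam0 by (simp add: algebra_simps)
      thus ?thesis using True by (simp add: ennreal_ge_1)
    qed simp
    thus "indicator {x'. Z x' \<ge> T} x' \<le> ennreal (exp (- lam * T)) * ennreal (Phi n f x')"
      by (simp add: ennreal_mult PhiZ)
  qed
  also have "\<dots> = ennreal (exp (- lam * T)) * (\<integral>\<^sup>+x'. ennreal (Phi n f x') \<partial>p)"
    by (rule nn_integral_cmult) simp
  also have "\<dots> \<le> ennreal (exp (- lam * T)) * ennreal (Phi n B x)"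
    unfolding p_def B_def by (intro mult_left_mono run_bound[OF Mm fpos]) simp
  also have "\<dots> \<le> ennreal (exp (- lam * T)) * ennreal (exp (\<Sum>v\<in>{0..<n}. real (x v) * (B v - 1)))"
    by (intro mult_left_mono ennreal_leI Phi_exp Bpos) simp
  finally have markov: "ennreal (measure_pmf.prob p {x'. Z x' \<ge> T})
      \<le> ennreal (exp (- lam * T) * exp (\<Sum>v\<in>{0..<n}. real (x v) * (B v - 1)))"
    by (simp add: ennreal_mult)
  define \<xi>0 where "\<xi>0 v = real (x v)" for v
  define \<xi> where "\<xi> = cont_run n M t1 (t2 - t1) \<xi>0"
  have mle: "m \<le> real n * exp (- s)" using load unfolding m_def s_def L_def by simp
  have mlen: "m \<le> real n"
  proof -
    have "exp (- s) \<le> 1" using s48 by simp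
    thus ?thesis using mle npos by (smt (verit) mult_left_le)
  qed
  have xle: "real (x v) \<le> m" if "v < n" for v
  proof -
    have "x v \<le> (\<Sum>v\<in>{0..<n}. x v)" by (rule member_le_sum) (use that in auto)
    thus ?thesis unfolding m_def by (rule of_nat_mono)
  qed
  have fin2: "finite {\<bar>g u - g v\<bar> | u v. u \<in> {0..<n} \<and> v \<in> {0..<n}}" for g :: "nat \<Rightarrow> real"
  proof -
    have "{\<bar>g u - g v\<bar> | u v. u \<in> {0..<n} \<and> v \<in> {0..<n}} = (\<lambda>(u,v). \<bar>g u - g v\<bar>) ` ({0..<n} \<times> {0..<n})"
      by fastforce
    thus ?thesis by simp
  qed
  have disc0: "discrepancy n \<xi>0 \<le> real n"
    unfolding discrepancy_def
  proof (subst Max_le_iff[OF fin2])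
    have "\<bar>\<xi>0 0 - \<xi>0 0\<bar> \<in> {\<bar>\<xi>0 u - \<xi>0 v\<bar> | u v. u \<in> {0..<n} \<and> v \<in> {0..<n}}" using n1 by (intro CollectI exI[of _ 0] conjI) auto
    thus "{\<bar>\<xi>0 u - \<xi>0 v\<bar> | u v. u \<in> {0..<n} \<and> v \<in> {0..<n}} \<noteq> {}" by blast
    show "\<forall>a\<in>{\<bar>\<xi>0 u - \<xi>0 v\<bar> | u v. u \<in> {0..<n} \<and> v \<in> {0..<n}}. a \<le> real n"
    proof safe
      fix u v assume "u \<in> {0..<n}" "v \<in> {0..<n}"
      hence "\<xi>0 u \<le> m" "\<xi>0 v \<le> m" "0 \<le> \<xi>0 u" "0 \<le> \<xi>0 v" using xle unfolding \<xi>0_def by auto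
      thus "\<bar>\<xi>0 u - \<xi>0 v\<bar> \<le> real n" using mlen by linarith
    qed
  qed
  have disc1: "discrepancy n \<xi> \<le> real n powr (-3)"
    using sm disc0 unfolding smoothing_def \<xi>_def by blast
  have xi_diff: "\<xi> u - \<xi> v \<le> real n powr (-3)" if "u < n" "v < n" for u v
  proof -
    have "\<bar>\<xi> u - \<xi> v\<bar> \<le> discrepancy n \<xi>"
      unfolding discrepancy_def using that by (intro Max_ge[OF fin2]) auto
    thus ?thesis using disc1 by linarith
  qed
  have xi_sum: "(\<Sum>v\<in>{0..<n}. \<xi> v) = m"
    unfolding \<xi>_def m_def \<xi>0_def using cont_run_sum[OF Mm] by simp
  have xi0: "\<forall>v<n. 0 \<le> \<xi> v" unfolding \<xi>_def \<xi>0_def by (rule cont_run_nonneg) simp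
  define \<mu> where "\<mu> = m / real n + real n powr (-3)"
  have xi_le: "\<xi> u \<le> \<mu>" if "u < n" for u
  proof -
    have "(\<Sum>v\<in>{0..<n}. \<xi> u) \<le> (\<Sum>v\<in>{0..<n}. \<xi> v + real n powr (-3))"
      using xi_diff that by (intro sum_mono) (auto simp: algebra_simps)
    hence "real n * \<xi> u \<le> m + real n * real n powr (-3)"
      using xi_sum by (simp add: sum.distrib)
    thus ?thesis unfolding \<mu>_def using npos by (simp add: field_simps)
  qed
  have mu0: "0 \<le> \<mu>" unfolding \<mu>_def m_def by (intro add_nonneg_nonneg divide_nonneg_nonneg) (auto intro: sum_nonneg)
  have mu_le: "\<mu> \<le> exp (- s) + exp (- 3 * L)"
  proof -
    have "m / real n \<le> exp (- s)" using mle npos by (simp add: field_simps)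
    moreover have "real n powr (-3) = exp (- 3 * L)" unfolding L_def powr_def using npos by simp
    ultimately show ?thesis unfolding \<mu>_def by simp
  qed
  have "(\<Sum>v\<in>{0..<n}. real (x v) * (B v - 1)) = (\<Sum>v\<in>{0..<n}. \<xi>0 v * B v) - m"
    unfolding m_def \<xi>0_def by (simp add: algebra_simps sum_subtractf)
  also have "(\<Sum>v\<in>{0..<n}. \<xi>0 v * B v) = (\<Sum>u\<in>{0..<n}. \<xi> u * f u)"
    unfolding B_def \<xi>_def by (rule duality)
  also have "(\<Sum>u\<in>{0..<n}. \<xi> u * f u) - m = (\<Sum>u\<in>{0..<n}. \<xi> u * (f u - 1))"
    using xi_sum by (simp add: algebra_simps sum_subtractf)
  also have "\<dots> \<le> (\<Sum>u\<in>{0..<n}. \<mu> * ((y u / Y) * (exp (s / 48) - 1)))"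
  proof (intro sum_mono)
    fix u assume u: "u \<in> {0..<n}"
    have yu: "0 \<le> y u" "y u \<le> Y" using y0 yY u by auto
    have f1: "0 \<le> f u - 1" unfolding f_def using lam0 yu by simp
    have "f u = exp ((y u / Y) * (lam * Y))" unfolding f_def using Ypos by simp
    also have "\<dots> \<le> 1 + (y u / Y) * (exp (lam * Y) - 1)"
      using yu Ypos by (intro exp_convex_bound) auto
    finally have "f u - 1 \<le> (y u / Y) * (exp (s / 48) - 1)"
      unfolding lam_def using Ypos by simp
    hence "\<xi> u * (f u - 1) \<le> \<xi> u * ((y u / Y) * (exp (s / 48) - 1))"
      using xi0 u by (intro mult_left_mono) auto
    also have "\<dots> \<le> \<mu> * ((y u / Y) * (exp (s / 48) - 1))"
      using xi_le u yu Ypos s48 by (intro mult_right_mono) auto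
    finally show "\<xi> u * (f u - 1) \<le> \<mu> * ((y u / Y) * (exp (s / 48) - 1))" .
  qed
  also have "\<dots> = (\<Sum>u\<in>{0..<n}. (\<mu> * (exp (s / 48) - 1) / Y) * y u)"
    by (intro sum.cong) auto
  also have "\<dots> = (\<mu> * (exp (s / 48) - 1) / Y) * (\<Sum>u\<in>{0..<n}. y u)"
    by (rule sum_distrib_left[symmetric])
  also have "\<dots> = \<mu> * (exp (s / 48) - 1) / Y" using y1 by simp
  finally have E: "(\<Sum>v\<in>{0..<n}. real (x v) * (B v - 1)) \<le> \<mu> * (exp (s / 48) - 1) / Y" .
  have num: "\<mu> * (exp (s / 48) - 1) \<le> s * exp (- (1/5) * s) / 48"
    using numeric[OF s48 sL mu0 mu_le] .
  have pw: "L powr (\<delta> + \<sigma>) = L powr \<delta> * s" unfolding s_def by (simp add: powr_add)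
  have "- lam * T + (\<Sum>v\<in>{0..<n}. real (x v) * (B v - 1))
        \<le> - lam * T + \<mu> * (exp (s / 48) - 1) / Y" using E by simp
  also have "\<dots> \<le> - lam * T + (s * exp (- (1/5) * s) / 48) / Y"
    using divide_right_mono[OF num, of Y] Ypos by simp
  also have "\<dots> = - (L powr (\<delta> + \<sigma>)) / 6"
    unfolding lam_def T_def pw s_def using Ypos by (simp add: field_simps)
  finally have expo: "- lam * T + (\<Sum>v\<in>{0..<n}. real (x v) * (B v - 1)) \<le> - (L powr (\<delta> + \<sigma>)) / 6" .
  have "measure_pmf.prob p {x'. Z x' \<ge> T} \<le> exp (- lam * T) * exp (\<Sum>v\<in>{0..<n}. real (x v) * (B v - 1))"
    using markov by (simp add: ennreal_le_iff)
  also have "\<dots> \<le> exp (- (L powr (\<delta> + \<sigma>)) / 6)"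
    unfolding exp_add[symmetric] using expo by simp
  finally show "measure_pmf.prob (disc_run M t1 (t2 - t1) x)
      {x'. (\<Sum>v\<in>{0..<n}. y v * real (x' v)) \<ge>
             exp (- (1/5) * ln (real n) powr \<sigma>) + 8 * Max (y ` {0..<n}) * ln (real n) powr \<delta>}
    \<le> exp (- (ln (real n) powr (\<delta> + \<sigma>)) / 6)"
    unfolding p_def Z_def T_def Y_def L_def .
qed


end
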